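(* In the setting described in the context, let $\mathbf{r}_t,\mathbf{s}_t,\mathbf{L}_t$ be produced by the O-LSD iteration. Then: (1) the values $\hat\ell(\mathbf{d},\mathbf{L},\mathbf{r},\mathbf{s})$ and $\ell(\mathbf{d},\mathbf{L})$ (for data $\mathbf{d}$, iterates $\mathbf{L}=\mathbf{L}_t$ and the corresponding minimizers $\mathbf{r},\mathbf{s}$) are uniformly bounded; (2) the surrogate functions $g_t(\mathbf{L})$ are uniformly bounded and Lipschitz in $\mathbf{L}$.
   Context: Fix integers $p,r\ge 1$ and constants $\lambda_1,\lambda_2>0$. Let $\mathcal{G}$ be a finite collection of subsets of $\{1,\dots,p\}$. For $\mathbf{s}\in\mathbb{R}^p$ and $g\in\mathcal{G}$, let $\mathbf{s}_{|g}$ be the vector equal to $\mathbf{s}$ on indices in $g$ and zero elsewhere, and $\|\mathbf{s}\|_{\ell_1/\ell_\infty}=\sum_{g\in\mathcal{G}}\|\mathbf{s}_{|g}\|_\infty$. Define $\hat\ell(\mathbf{d},\mathbf{L},\mathbf{r},\mathbf{s})=\tfrac12\|\mathbf{d}-\mathbf{L}\mathbf{r}-\mathbf{s}\|_2^2+\tfrac{\lambda_1}{2}\|\mathbf{r}\|_2^2+\lambda_2\|\mathbf{s}\|_{\ell_1/\ell_\infty}$ and $\ell(\mathbf{d},\mathbf{L})=\min_{\mathbf{r},\mathbf{s}}\hat\ell(\mathbf{d},\mathbf{L},\mathbf{r},\mathbf{s})$. Data: $\mathbf{d}_1,\mathbf{d}_2,\dots\in\mathbb{R}^p$ independent and uniformly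 bounded (there is $M$ with $\|\mathbf{d}_t\|_2\le M$ for all $t$). O-LSD iteration: arbitrary $\mathbf{L}_0\in\mathbb{R}^{p\times r}$, $\mathbf{A}_0=\mathbf{0}$, $\mathbf{B}_0=\mathbf{0}$. For $t\ge1$: $(\mathbf{r}_t,\mathbf{s}_t)$ is a minimizer of $\hat\ell(\mathbf{d}_t,\mathbf{L}_{t-1},\cdot,\cdot)$; $\mathbf{A}_t=\mathbf{A}_{t-1}+\mathbf{r}_t\mathbf{r}_t^T$, $\mathbf{B}_t=\mathbf{B}_{t-1}+(\mathbf{d}_t-\mathbf{s}_t)\mathbf{r}_t^T$; $\mathbf{L}_t$ is the minimizer of the surrogate $g_t(\mathbf{L})=\frac1t\sum_{i=1}^t\hat\ell(\mathbf{d}_i,\mathbf{L},\mathbf{r}_i,\mathbf{s}_i)+\frac{\lambda_1}{2t}\|\mathbf{L}\|_F^2$, i.e. $\mathbf{L}_t=\mathbf{B}_t(\mathbf{A}_t+\lambda_1\mathbf{I})^{-1}$. The iterates $\mathbf{L}_t$ lie in a compact set $\mathcal{L}\subset\mathbb{R}^{p\times r}$, and "uniformly bounded/Lipschitz" means with constants independent of $t$, for $\mathbf{L}\in\mathcal{L}$. *)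

theory Defs
  imports "HOL-Analysis.Analysis"
begin

definition restr :: "real ^ 'p \<Rightarrow> 'p set \<Rightarrow> real ^ 'p" where
  "restr s g = (\<chi> i. if i \<in> g then s $ i else 0)"

text \<open>Sup-norm of a vector (index type finite, hence nonempty).\<close>
definition linf_norm :: "real ^ 'p \<Rightarrow> real" where
  "linf_norm s = Max (range (\<lambda>i. \<bar>s $ i\<bar>))"

definition l1linf :: "'p set set \<Rightarrow> real ^ 'p \<Rightarrow> real" where
  "l1linf G s = (\<Sum>g\<in>G. linf_norm (restr s g))"

definition lhat :: "real \<Rightarrow> real \<Rightarrow> 'p set set \<Rightarrow> real ^ 'p \<Rightarrow> real ^ 'r ^ 'p
                     \<Rightarrow> real ^ 'r \<Rightarrow> real ^ 'p \<Rightarrow> real" where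
  "lhat lam1 lam2 G d L r s =
     (1/2) * (norm (d - L *v r - s))\<^sup>2 + (lam1/2) * (norm r)\<^sup>2 + lam2 * l1linf G s"

text \<open>ell(d,L) = min over (r,s) of lhat; written as the infimum (attained).\<close>
definition ell :: "real \<Rightarrow> real \<Rightarrow> 'p set set \<Rightarrow> real ^ 'p \<Rightarrow> real ^ 'r ^ 'p \<Rightarrow> real" where
  "ell lam1 lam2 G d L = (INF rs\<in>UNIV. lhat lam1 lam2 G d L (fst rs) (snd rs))"

definition is_minimizer :: "real \<Rightarrow> real \<Rightarrow> 'p set set \<Rightarrow> real ^ 'p \<Rightarrow> real ^ 'r ^ 'p
                              \<Rightarrow> real ^ 'r \<Rightarrow> real ^ 'p \<Rightarrow> bool" where
  "is_minimizer lam1 lam2 G d L r s \<longleftrightarrow>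
     (\<forall>r' s'. lhat lam1 lam2 G d L r s \<le> lhat lam1 lam2 G d L r' s')"

definition outer :: "real ^ 'm \<Rightarrow> real ^ 'n \<Rightarrow> real ^ 'n ^ 'm" where
  "outer u v = (\<chi> a b. u $ a * v $ b)"

definition Amat :: "(nat \<Rightarrow> real ^ 'r) \<Rightarrow> nat \<Rightarrow> real ^ 'r ^ 'r" where
  "Amat r t = (\<Sum>i\<in>{1..t}. outer (r i) (r i))"

definition Bmat :: "(nat \<Rightarrow> real ^ 'p) \<Rightarrow> (nat \<Rightarrow> real ^ 'r) \<Rightarrow> (nat \<Rightarrow> real ^ 'p) \<Rightarrow> nat
                     \<Rightarrow> real ^ 'r ^ 'p" where
  "Bmat d r s t = (\<Sum>i\<in>{1..t}. outer (d i - s i) (r i))"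

text \<open>Surrogate g_t(L); the Frobenius norm of L is the Euclidean norm on real^'r^'p.\<close>
definition surrogate :: "real \<Rightarrow> real \<Rightarrow> 'p set set \<Rightarrow> (nat \<Rightarrow> real ^ 'p) \<Rightarrow> (nat \<Rightarrow> real ^ 'r)
                          \<Rightarrow> (nat \<Rightarrow> real ^ 'p) \<Rightarrow> nat \<Rightarrow> real ^ 'r ^ 'p \<Rightarrow> real" where
  "surrogate lam1 lam2 G d r s t L =
     (1 / real t) * (\<Sum>i\<in>{1..t}. lhat lam1 lam2 G (d i) L (r i) (s i))
     + lam1 / (2 * real t) * (norm L)\<^sup>2"

end

theory Submission
  imports Defs
begin

lemma mv_bound:
  fixes A :: "real^'n::finite^'m::finite"
  shows "norm (A *v x) \<le> (real CARD('m) * real CARD('n)) * norm A * norm x"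
proof -
  have "\<And>i j. \<bar>A$i$j\<bar> \<le> norm A"
    by (rule order_trans[OF component_le_norm_cart Finite_Cartesian_Product.norm_nth_le])
  hence "onorm ((*v) A) \<le> real CARD('m) * real CARD('n) * norm A"
    by (rule onorm_le_matrix_component)
  moreover have "norm (A *v x) \<le> onorm ((*v) A) * norm x"
    by (rule onorm) (simp add: matrix_vector_mul_bounded_linear)
  ultimately show ?thesis by (meson mult_right_mono norm_ge_zero order_trans)
qed
lemma linf_nonneg: "linf_norm (s::real^'p::finite) \<ge> 0"
  unfolding linf_norm_def
  by (rule order_trans[OF abs_ge_zero Max_ge[of "range (\<lambda>i. \<bar>s $ i\<bar>)" "\<bar>s $ undefined\<bar>"]]) auto
lemma l1linf_nonneg: "l1linf G s \<ge> 0"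
  unfolding l1linf_def by (simp add: sum_nonneg linf_nonneg)
lemma l1linf_0: "l1linf G (0::real^'p::finite) = 0"
proof -
  have r: "restr 0 g = (0::real^'p)" for g unfolding restr_def by (simp add: vec_eq_iff)
  have "range (\<lambda>i::'p. \<bar>(0::real^'p) $ i\<bar>) = {0}" by auto
  hence "linf_norm (0::real^'p) = 0" unfolding linf_norm_def by simp
  thus ?thesis unfolding l1linf_def r by simp
qed
lemma lhat_nonneg: "lam1 > 0 \<Longrightarrow> lam2 > 0 \<Longrightarrow> lhat lam1 lam2 G d L r s \<ge> 0"
  unfolding lhat_def using l1linf_nonneg[of G s] by simp
lemma lhat_00: "lhat lam1 lam2 G d L 0 0 = (1/2) * (norm d)^2"
  unfolding lhat_def by (simp add: l1linf_0)
lemma tri3: "norm (a - b - (c::'a::real_normed_vector)) \<le> norm a + norm b + norm c"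
  using norm_triangle_ineq4[of "a - b" c] norm_triangle_ineq4[of a b] by linarith

lemma sqdiff: "\<bar>(norm (u::'a::real_normed_vector))^2 - (norm v)^2\<bar> \<le> norm (u - v) * (norm u + norm v)"
proof -
  have "(norm u)^2 - (norm v)^2 = (norm u - norm v) * (norm u + norm v)" by (simp add: power2_eq_square algebra_simps)
  hence "\<bar>(norm u)^2 - (norm v)^2\<bar> = \<bar>norm u - norm v\<bar> * (norm u + norm v)" by (simp add: abs_mult)
  also have "\<dots> \<le> norm (u - v) * (norm u + norm v)"
    by (rule mult_right_mono) (auto simp: norm_triangle_ineq3)
  finally show ?thesis .
qed

theorem proposition2:
  fixes lam1 lam2 M :: real
    and G :: "'p::finite set set"
    and d :: "nat \<Rightarrow> real ^ 'p"
    and r :: "nat \<Rightarrow> real ^ 'r::finite"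
    and s :: "nat \<Rightarrow> real ^ 'p"
    and L :: "nat \<Rightarrow> real ^ 'r ^ 'p"
    and LL :: "(real ^ 'r ^ 'p) set"
  assumes lam1: "lam1 > 0" and lam2: "lam2 > 0"
    and G_fin: "finite G"
    and d_bd: "\<And>t. norm (d t) \<le> M"
    and rs_min: "\<And>t. t \<ge> 1 \<Longrightarrow> is_minimizer lam1 lam2 G (d t) (L (t - 1)) (r t) (s t)"
    and L_upd: "\<And>t. t \<ge> 1 \<Longrightarrow>
                  L t = Bmat d r s t ** matrix_inv (Amat r t + lam1 *\<^sub>R mat 1)"
    and LL_compact: "compact LL"
    and L_in: "\<And>t. L t \<in> LL"
  shows
    "(\<exists>C. (\<forall>t\<ge>1. \<bar>lhat lam1 lam2 G (d t) (L (t - 1)) (r t) (s t)\<bar> \<le> C)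
          \<and> (\<forall>t i. \<bar>ell lam1 lam2 G (d i) (L t)\<bar> \<le> C))
     \<and> (\<exists>C K. \<forall>t\<ge>1.
          (\<forall>X\<in>LL. \<bar>surrogate lam1 lam2 G d r s t X\<bar> \<le> C)
          \<and> (\<forall>X\<in>LL. \<forall>Y\<in>LL.
               \<bar>surrogate lam1 lam2 G d r s t X - surrogate lam1 lam2 G d r s t Y\<bar>
                 \<le> K * norm (X - Y)))"
proof -
  note defs = lhat_def
  have M0: "M \<ge> 0" using d_bd[of 0] norm_ge_zero order_trans by blast
  obtain B where B0: "B > 0" and BX: "\<And>X. X \<in> LL \<Longrightarrow> norm X \<le> B"
    using compact_imp_bounded[OF LL_compact] bounded_pos by blast
  define c where "c = real CARD('p) * real CARD('r)"
  have c0: "c \<ge> 0" unfolding c_def by simp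
  have mv: "norm (X *v x) \<le> c * norm X * norm x" for X :: "real^'r^'p" and x
    unfolding c_def by (rule mv_bound)
  define R where "R = sqrt (M^2 / lam1)"
  have R0: "R \<ge> 0" unfolding R_def using lam1 by simp
  define S where "S = 2 * M + c * B * R"
  define W where "W = M + c * B * R + S"
  define K0 where "K0 = c * R * W"
  have K00: "K0 \<ge> 0" unfolding K0_def W_def S_def using M0 c0 R0 B0 by simp
  have Mhalf: "lhat lam1 lam2 G (d t) (L (t - 1)) (r t) (s t) \<le> M^2 / 2" if t: "t \<ge> 1" for t
  proof -
    have "lhat lam1 lam2 G (d t) (L (t - 1)) (r t) (s t) \<le> lhat lam1 lam2 G (d t) (L (t - 1)) 0 0"
      using rs_min[OF t] unfolding is_minimizer_def by blast
    also have "\<dots> = (1/2) * (norm (d t))^2" by (rule lhat_00)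
    also have "\<dots> \<le> M^2 / 2" using d_bd[of t] by (simp add: power_mono)
    finally show ?thesis .
  qed
  have rb: "norm (r t) \<le> R" and Nb: "norm (d t - L (t - 1) *v r t - s t) \<le> M"
     and l1b: "lam2 * l1linf G (s t) \<le> M^2/2" if t: "t \<ge> 1" for t
  proof -
    have h: "(1/2) * (norm (d t - L (t - 1) *v r t - s t))\<^sup>2 + (lam1/2) * (norm (r t))\<^sup>2
            + lam2 * l1linf G (s t) \<le> M^2/2"
      using Mhalf[OF t] unfolding lhat_def .
    have p1: "(norm (d t - L (t - 1) *v r t - s t))\<^sup>2 \<ge> 0" by simp
    have p2: "(lam1/2) * (norm (r t))\<^sup>2 \<ge> 0" using lam1 by simp
    have p3: "lam2 * l1linf G (s t) \<ge> 0" using lam2 l1linf_nonneg[of G "s t"] by simp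
    have "lam1 * (norm (r t))\<^sup>2 \<le> M^2" using h p1 p3 by linarith
    hence "(norm (r t))\<^sup>2 \<le> M^2 / lam1" using lam1 by (simp add: field_simps)
    thus "norm (r t) \<le> R" unfolding R_def by (rule real_le_rsqrt)
    have "(norm (d t - L (t - 1) *v r t - s t))\<^sup>2 \<le> M^2" using h p2 p3 by linarith
    thus "norm (d t - L (t - 1) *v r t - s t) \<le> M" using M0 by (rule power2_le_imp_le)
    show "lam2 * l1linf G (s t) \<le> M^2/2" using h p1 p2 by linarith
  qed
  have sb: "norm (s t) \<le> S" if t: "t \<ge> 1" for t
  proof -
    have e: "s t = d t - L (t - 1) *v r t - (d t - L (t - 1) *v r t - s t)" by simp
    have "norm (s t) \<le> norm (d t) + norm (L (t - 1) *v r t) + norm (d t - L (t - 1) *v r t - s t)"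
      using tri3[of "d t" "L (t - 1) *v r t" "d t - L (t - 1) *v r t - s t"] by (simp only: e[symmetric])
    moreover have "norm (L (t - 1) *v r t) \<le> c * B * R"
    proof -
      have "norm (L (t - 1) *v r t) \<le> c * norm (L (t - 1)) * norm (r t)" by (rule mv)
      also have "\<dots> \<le> c * B * R"
        using BX[OF L_in] rb[OF t] c0 B0 by (intro mult_mono mult_left_mono) auto
      finally show ?thesis .
    qed
    ultimately show ?thesis using d_bd[of t] Nb[OF t] unfolding S_def by linarith
  qed
  have lip1: "\<bar>lhat lam1 lam2 G (d t) X (r t) (s t) - lhat lam1 lam2 G (d t) Y (r t) (s t)\<bar>
              \<le> K0 * norm (X - Y)" if t: "t \<ge> 1" and X: "X \<in> LL" and Y: "Y \<in> LL" for t X Y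
  proof -
    define u where "u = d t - X *v r t - s t"
    define v where "v = d t - Y *v r t - s t"
    have uv: "u - v = (Y - X) *v r t" unfolding u_def v_def by (simp add: algebra_simps)
    have nuv: "norm (u - v) \<le> c * norm (X - Y) * R"
    proof -
      have "norm (u - v) \<le> c * norm (Y - X) * norm (r t)" unfolding uv by (rule mv)
      also have "\<dots> \<le> c * norm (X - Y) * R"
        using rb[OF t] c0 by (simp add: norm_minus_commute mult_left_mono)
      finally show ?thesis .
    qed
    have nb: "norm (d t - Z *v r t - s t) \<le> W" if Z: "Z \<in> LL" for Z
    proof -
      have "norm (d t - Z *v r t - s t) \<le> norm (d t) + norm (Z *v r t) + norm (s t)"
        by (rule tri3)
      moreover have "norm (Z *v r t) \<le> c * B * R"
      proof -
        have "norm (Z *v r t) \<le> c * norm Z * norm (r t)" by (rule mv)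
        also have "\<dots> \<le> c * B * R"
          using BX[OF Z] rb[OF t] c0 B0 by (intro mult_mono mult_left_mono) auto
        finally show ?thesis .
      qed
      ultimately show ?thesis using d_bd[of t] sb[OF t] unfolding W_def by linarith
    qed
    have hdiff: "lhat lam1 lam2 G (d t) X (r t) (s t) - lhat lam1 lam2 G (d t) Y (r t) (s t)
          = (1/2) * ((norm u)^2 - (norm v)^2)" unfolding lhat_def u_def v_def by (simp add: algebra_simps)
    have "\<bar>lhat lam1 lam2 G (d t) X (r t) (s t) - lhat lam1 lam2 G (d t) Y (r t) (s t)\<bar>
          = (1/2) * \<bar>(norm u)^2 - (norm v)^2\<bar>" unfolding hdiff by (simp add: abs_mult)
    also have "\<dots> \<le> (1/2) * (norm (u - v) * (norm u + norm v))" using sqdiff[of u v] by simp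
    also have "\<dots> \<le> (1/2) * ((c * norm (X - Y) * R) * (W + W))"
      using nuv nb[OF X] nb[OF Y] unfolding u_def[symmetric] v_def[symmetric]
      by (intro mult_left_mono mult_mono add_mono) (auto simp: c0 R0)
    also have "\<dots> = K0 * norm (X - Y)" unfolding K0_def by (simp add: algebra_simps)
    finally show ?thesis .
  qed
  define C1 where "C1 = M^2/2 + K0 * (2 * B)"
  have bd1: "\<bar>lhat lam1 lam2 G (d t) X (r t) (s t)\<bar> \<le> C1" if t: "t \<ge> 1" and X: "X \<in> LL" for t X
  proof -
    have a: "\<bar>lhat lam1 lam2 G (d t) (L (t - 1)) (r t) (s t)\<bar> \<le> M^2/2"
      using Mhalf[OF t] abs_of_nonneg[OF lhat_nonneg[OF lam1 lam2, of G "d t" "L (t - 1)" "r t" "s t"]] by linarith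
    have "norm (X - L (t - 1)) \<le> 2 * B"
      using BX[OF X] BX[OF L_in, of "t - 1"] norm_triangle_ineq4[of X "L (t - 1)"] by linarith
    hence b: "K0 * norm (X - L (t - 1)) \<le> K0 * (2 * B)" using K00 by (rule mult_left_mono)
    show ?thesis using lip1[OF t X L_in[of "t - 1"]] a b unfolding C1_def by linarith
  qed
  have bndS: "\<bar>surrogate lam1 lam2 G d r s t X\<bar> \<le> C1 + lam1/2 * B^2" if t: "t \<ge> 1" and X: "X \<in> LL" for t X
  proof -
    have tp: "real t > 0" using t by simp
    have "\<bar>\<Sum>i\<in>{1..t}. lhat lam1 lam2 G (d i) X (r i) (s i)\<bar> \<le> (\<Sum>i\<in>{1..t}. C1)"
      by (rule order_trans[OF sum_abs sum_mono]) (use bd1 X in auto)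
    hence s1: "\<bar>(1 / real t) * (\<Sum>i\<in>{1..t}. lhat lam1 lam2 G (d i) X (r i) (s i))\<bar> \<le> C1"
      using tp by (simp add: abs_mult field_simps)
    have "(norm X)^2 \<le> B^2" using BX[OF X] by (simp add: power_mono)
    hence "lam1 / (2 * real t) * (norm X)^2 \<le> lam1 / 2 * B^2"
      using lam1 t by (intro mult_mono frac_le) auto
    moreover have "lam1 / (2 * real t) * (norm X)^2 \<ge> 0" using lam1 by simp
    ultimately show "\<bar>surrogate lam1 lam2 G d r s t X\<bar> \<le> C1 + lam1/2 * B^2"
      using s1 unfolding surrogate_def by linarith
  qed
  have lipS: "\<bar>surrogate lam1 lam2 G d r s t X - surrogate lam1 lam2 G d r s t Y\<bar> \<le> (K0 + lam1 * B) * norm (X - Y)"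
    if t: "t \<ge> 1" and X: "X \<in> LL" and Y: "Y \<in> LL" for t X Y
  proof -
    have tp: "real t > 0" using t by simp
    have "\<bar>(\<Sum>i\<in>{1..t}. lhat lam1 lam2 G (d i) X (r i) (s i)) - (\<Sum>i\<in>{1..t}. lhat lam1 lam2 G (d i) Y (r i) (s i))\<bar>
          \<le> (\<Sum>i\<in>{1..t}. K0 * norm (X - Y))"
      unfolding sum_subtractf[symmetric]
      by (rule order_trans[OF sum_abs sum_mono]) (use lip1 X Y in auto)
    hence s1: "\<bar>(1 / real t) * (\<Sum>i\<in>{1..t}. lhat lam1 lam2 G (d i) X (r i) (s i))
               - (1 / real t) * (\<Sum>i\<in>{1..t}. lhat lam1 lam2 G (d i) Y (r i) (s i))\<bar> \<le> K0 * norm (X - Y)"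
      using tp by (simp add: abs_mult field_simps right_diff_distrib[symmetric])
    have "\<bar>(norm X)^2 - (norm Y)^2\<bar> \<le> norm (X - Y) * (B + B)"
      using sqdiff[of X Y] BX[OF X] BX[OF Y]
      by (meson add_mono mult_left_mono norm_ge_zero order_trans)
    hence "lam1 / (2 * real t) * \<bar>(norm X)^2 - (norm Y)^2\<bar> \<le> lam1 / 2 * (norm (X - Y) * (B + B))"
      using lam1 t by (intro mult_mono frac_le) auto
    moreover have "\<bar>lam1 / (2 * real t) * (norm X)^2 - lam1 / (2 * real t) * (norm Y)^2\<bar>
        = lam1 / (2 * real t) * \<bar>(norm X)^2 - (norm Y)^2\<bar>"
      unfolding right_diff_distrib[symmetric] abs_mult using lam1 tp by simp
    moreover have "lam1 / 2 * (norm (X - Y) * (B + B)) = lam1 * B * norm (X - Y)" by simp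
    ultimately have s2: "\<bar>lam1 / (2 * real t) * (norm X)^2 - lam1 / (2 * real t) * (norm Y)^2\<bar> \<le> lam1 * B * norm (X - Y)"
      by linarith
    show "\<bar>surrogate lam1 lam2 G d r s t X - surrogate lam1 lam2 G d r s t Y\<bar> \<le> (K0 + lam1 * B) * norm (X - Y)"
      using s1 s2 unfolding surrogate_def by (simp add: algebra_simps)
  qed
  show ?thesis
  proof (intro conjI)
    show "\<exists>C. (\<forall>t\<ge>1. \<bar>lhat lam1 lam2 G (d t) (L (t - 1)) (r t) (s t)\<bar> \<le> C)
          \<and> (\<forall>t i. \<bar>ell lam1 lam2 G (d i) (L t)\<bar> \<le> C)"
    proof (intro exI[of _ "M^2/2"] conjI allI impI)
      fix t :: nat assume t: "t \<ge> 1"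
      show "\<bar>lhat lam1 lam2 G (d t) (L (t - 1)) (r t) (s t)\<bar> \<le> M^2/2"
        using Mhalf[OF t] abs_of_nonneg[OF lhat_nonneg[OF lam1 lam2, of G "d t" "L (t - 1)" "r t" "s t"]] by linarith
    next
      fix t i
      let ?f = "\<lambda>rs. lhat lam1 lam2 G (d i) (L t) (fst rs) (snd rs)"
      have bb: "bdd_below (range ?f)" by (rule bdd_belowI[of _ 0]) (auto intro: lhat_nonneg[OF lam1 lam2])
      have "ell lam1 lam2 G (d i) (L t) \<le> ?f (0, 0)" unfolding ell_def by (rule cINF_lower[OF bb]) simp
      also have "\<dots> \<le> M^2/2" using d_bd[of i] by (simp add: lhat_00 power_mono)
      finally have u: "ell lam1 lam2 G (d i) (L t) \<le> M^2/2" .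
      have "ell lam1 lam2 G (d i) (L t) \<ge> 0" unfolding ell_def
        by (rule cINF_greatest) (auto intro: lhat_nonneg[OF lam1 lam2])
      thus "\<bar>ell lam1 lam2 G (d i) (L t)\<bar> \<le> M^2/2" using u by simp
    qed
  next
    show "\<exists>C K. \<forall>t\<ge>1.
          (\<forall>X\<in>LL. \<bar>surrogate lam1 lam2 G d r s t X\<bar> \<le> C)
          \<and> (\<forall>X\<in>LL. \<forall>Y\<in>LL.
               \<bar>surrogate lam1 lam2 G d r s t X - surrogate lam1 lam2 G d r s t Y\<bar>
                 \<le> K * norm (X - Y))"
    proof (rule exI[of _ "C1 + lam1/2 * B^2"], rule exI[of _ "K0 + lam1 * B"], intro allI impI conjI ballI)
    qed (use bndS lipS in auto)
  qed
qed

end
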